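(* Let $\mathcal{F}=(M,\{A^u\}_{u\in Q})$ be an FDFA and let $\mathcal{D}_1$ be the automaton constructed from it as in the context. Then $L(\mathcal{D}_1)=\{u\$v\mid u\in\Sigma^*,\ v\in\Sigma^*,\ M(uv)=M(u),\ v\in L(A^{M(u)})\}$.
   Context: $\Sigma$ is a finite alphabet and $\$\notin\Sigma$. For a complete DFA $A$ and finite word $w$, $A(w)$ is the state reached from the initial state on $w$. An FDFA is $\mathcal{F}=(M,\{A^q\}_{q\in Q})$ with $M=(\Sigma,Q,q_0,\delta)$ a complete DFA without accepting states and each $A^q=(\Sigma,Q^q,s^q,F^q,\delta^q)$ a complete DFA. For a state $u\in Q$, $M^u_u$ is $M$ with initial state $u$ and accepting set $\{u\}$, and $N_u=M^u_u\times A^u$ is the synchronous product DFA (accepting exactly the words accepted by both), written $N_u=(\Sigma,Q_u,s_u,F_u,\delta_u)$. Then $\mathcal{D}_1=(\Sigma\cup\{\$\},\ Q\cup\bigcup_{u\in Q}Q_u,\ q_0,\ \bigcup_{u\in Q}F_u,\ \delta\cup\bigcup_{u\in Q}\delta_u\cup\{(u,\$,s_u)\mid u\in Q\})$, where the sets $Q_u$ are disjoint copies. *)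

theory Defs
  imports Main
begin

record ('q, 'a) dfa =
  states :: "'q set"
  init   :: 'q
  final  :: "'q set"
  trans  :: "'q \<Rightarrow> 'a \<Rightarrow> 'q"

definition complete_dfa :: "('q, 'a) dfa \<Rightarrow> bool" where
  "complete_dfa A \<longleftrightarrow> finite (states A) \<and> init A \<in> states A \<and> final A \<subseteq> states A
     \<and> (\<forall>q \<in> states A. \<forall>a. trans A q a \<in> states A)"

primrec run :: "('q, 'a) dfa \<Rightarrow> 'q \<Rightarrow> 'a list \<Rightarrow> 'q" where
  "run A q [] = q"
| "run A q (a # w) = run A (trans A q a) w"

definition reach :: "('q, 'a) dfa \<Rightarrow> 'a list \<Rightarrow> 'q" where
  "reach A w = run A (init A) w"

definition lang :: "('q, 'a) dfa \<Rightarrow> 'a list set" where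
  "lang A = {w. reach A w \<in> final A}"

definition prod_dfa :: "('p, 'a) dfa \<Rightarrow> ('q, 'a) dfa \<Rightarrow> ('p \<times> 'q, 'a) dfa" where
  "prod_dfa A B = \<lparr> states = states A \<times> states B, init = (init A, init B),
     final = final A \<times> final B, trans = (\<lambda>(p, q) a. (trans A p a, trans B q a)) \<rparr>"

definition Muu :: "('q, 'a) dfa \<Rightarrow> 'q \<Rightarrow> ('q, 'a) dfa" where
  "Muu M u = M\<lparr> init := u, final := {u} \<rparr>"

definition fdfa :: "('q, 'a::finite) dfa \<Rightarrow> ('q \<Rightarrow> ('s, 'a) dfa) \<Rightarrow> bool" where
  "fdfa M A \<longleftrightarrow> complete_dfa M \<and> final M = {} \<and> (\<forall>u \<in> states M. complete_dfa (A u))"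

datatype 'a sym = Sym 'a | Dollar

record ('q, 'a) pdfa =
  pstates :: "'q set"
  pinit   :: 'q
  pfinal  :: "'q set"
  ptrans  :: "'q \<Rightarrow> 'a \<Rightarrow> 'q option"

primrec prun :: "('q, 'a) pdfa \<Rightarrow> 'q \<Rightarrow> 'a list \<Rightarrow> 'q option" where
  "prun D q [] = Some q"
| "prun D q (a # w) = (case ptrans D q a of None \<Rightarrow> None | Some q' \<Rightarrow> prun D q' w)"

definition plang :: "('q, 'a) pdfa \<Rightarrow> 'a list set" where
  "plang D = {w. \<exists>q. prun D (pinit D) w = Some q \<and> q \<in> pfinal D}"

text \<open>The automaton D1. States of M are tagged Inl; the copy Q_u of the states of
  N_u = M^u_u \<times> A^u is tagged Inr (u, -), making the copies disjoint.\<close>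
definition D1 :: "('q, 'a) dfa \<Rightarrow> ('q \<Rightarrow> ('s, 'a) dfa)
                   \<Rightarrow> ('q + ('q \<times> ('q \<times> 's)), 'a sym) pdfa" where
  "D1 M A = \<lparr>
     pstates = Inl ` states M \<union> (\<Union>u \<in> states M. (\<lambda>x. Inr (u, x)) ` states (prod_dfa (Muu M u) (A u))),
     pinit = Inl (init M),
     pfinal = (\<Union>u \<in> states M. (\<lambda>x. Inr (u, x)) ` final (prod_dfa (Muu M u) (A u))),
     ptrans = (\<lambda>st c. case (st, c) of
         (Inl q, Sym a) \<Rightarrow> (if q \<in> states M then Some (Inl (trans M q a)) else None)
       | (Inl u, Dollar) \<Rightarrow> (if u \<in> states M then Some (Inr (u, init (prod_dfa (Muu M u) (A u)))) else None)
       | (Inr (u, x), Sym a) \<Rightarrow>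
           (if u \<in> states M \<and> x \<in> states (prod_dfa (Muu M u) (A u))
            then Some (Inr (u, trans (prod_dfa (Muu M u) (A u)) x a)) else None)
       | (Inr _, Dollar) \<Rightarrow> None) \<rparr>"

end

theory Submission
  imports Defs
begin

lemma D1_simps:
  "ptrans (D1 M A) (Inl q) (Sym a) = (if q \<in> states M then Some (Inl (trans M q a)) else None)"
  "ptrans (D1 M A) (Inl q) Dollar = (if q \<in> states M then Some (Inr (q, init (prod_dfa (Muu M q) (A q)))) else None)"
  "ptrans (D1 M A) (Inr (u, x)) (Sym a) = (if u \<in> states M \<and> x \<in> states (prod_dfa (Muu M u) (A u))
            then Some (Inr (u, trans (prod_dfa (Muu M u) (A u)) x a)) else None)"
  "ptrans (D1 M A) (Inr (u, x)) Dollar = None"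
  "pinit (D1 M A) = Inl (init M)"
  "pfinal (D1 M A) = (\<Union>u \<in> states M. (\<lambda>x. Inr (u, x)) ` final (prod_dfa (Muu M u) (A u)))"
  by (simp_all add: D1_def)

lemma prod_simps: "init (prod_dfa B C) = (init B, init C)" "final (prod_dfa B C) = final B \<times> final C"
  "init (Muu M u) = u" "final (Muu M u) = {u}"
  by (simp_all add: prod_dfa_def Muu_def)

lemma prun_app: "prun D p (x @ y) = (case prun D p x of None \<Rightarrow> None | Some p' \<Rightarrow> prun D p' y)"
  by (induction x arbitrary: p) (auto split: option.split)

lemma run_append: "run A q (u @ v) = run A (run A q u) v"
  by (induction u arbitrary: q) auto

lemma run_states: "complete_dfa A \<Longrightarrow> q \<in> states A \<Longrightarrow> run A q u \<in> states A"
  by (induction u arbitrary: q) (auto simp: complete_dfa_def)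

lemma run_prod: "run (prod_dfa B C) (p, q) v = (run B p v, run C q v)"
  by (induction v arbitrary: p q) (auto simp: prod_dfa_def)

lemma run_Muu: "run (Muu M u) p v = run M p v"
  by (induction v arbitrary: p) (auto simp: Muu_def)

lemma complete_prod: "complete_dfa B \<Longrightarrow> complete_dfa C \<Longrightarrow> complete_dfa (prod_dfa B C)"
  unfolding complete_dfa_def prod_dfa_def by auto

lemma complete_Muu: "complete_dfa M \<Longrightarrow> u \<in> states M \<Longrightarrow> complete_dfa (Muu M u)"
  unfolding complete_dfa_def Muu_def by auto

lemma complete_N:
  assumes "fdfa M A" "u \<in> states M"
  shows "complete_dfa (prod_dfa (Muu M u) (A u))"
proof -
  have c1: "complete_dfa M" using assms(1) unfolding fdfa_def by (rule conjunct1)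
  have c2: "complete_dfa (A u)" using assms(1,2) unfolding fdfa_def by simp
  show ?thesis by (rule complete_prod[OF complete_Muu[OF c1 assms(2)] c2])
qed

lemma prod_states_closed:
  assumes "fdfa M A" "u \<in> states M" "x \<in> states (prod_dfa (Muu M u) (A u))"
  shows "run (prod_dfa (Muu M u) (A u)) x v \<in> states (prod_dfa (Muu M u) (A u))"
  using run_states[OF complete_N[OF assms(1,2)] assms(3)] .

lemma init_prod_states:
  assumes "fdfa M A" "u \<in> states M"
  shows "init (prod_dfa (Muu M u) (A u)) \<in> states (prod_dfa (Muu M u) (A u))"
  using complete_N[OF assms] unfolding complete_dfa_def by blast

lemma prun_Inr:
  assumes "fdfa M A" "u \<in> states M" "x \<in> states (prod_dfa (Muu M u) (A u))"
  shows "prun (D1 M A) (Inr (u, x)) (map Sym v) = Some (Inr (u, run (prod_dfa (Muu M u) (A u)) x v))"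
  using assms(3)
proof (induction v arbitrary: x)
  case Nil then show ?case by simp
next
  case (Cons a v)
  have "trans (prod_dfa (Muu M u) (A u)) x a \<in> states (prod_dfa (Muu M u) (A u))"
    using prod_states_closed[OF assms(1,2) Cons.prems, of "[a]"] by simp
  with Cons show ?case using assms(2) by (simp add: D1_simps)
qed

lemma prun_Inr_inv:
  assumes "fdfa M A" "u \<in> states M" "x \<in> states (prod_dfa (Muu M u) (A u))"
    "prun (D1 M A) (Inr (u, x)) w = Some s"
  shows "\<exists>v. w = map Sym v \<and> s = Inr (u, run (prod_dfa (Muu M u) (A u)) x v)"
  using assms(3,4)
proof (induction w arbitrary: x)
  case Nil then show ?case by simp
next
  case (Cons c w)
  show ?case
  proof (cases c)
    case (Sym a)
    have st: "trans (prod_dfa (Muu M u) (A u)) x a \<in> states (prod_dfa (Muu M u) (A u))"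
      using prod_states_closed[OF assms(1,2) Cons.prems(1), of "[a]"] by simp
    have "prun (D1 M A) (Inr (u, trans (prod_dfa (Muu M u) (A u)) x a)) w = Some s"
      using Cons.prems assms(2) Sym by (simp add: D1_simps)
    from Cons.IH[OF st this] show ?thesis
    proof (elim exE conjE)
      fix v assume h1: "w = map Sym v"
        and h2: "s = Inr (u, run (prod_dfa (Muu M u) (A u)) (trans (prod_dfa (Muu M u) (A u)) x a) v)"
      have e1: "c # w = map Sym (a # v)" using h1 Sym by simp
      have e2: "s = Inr (u, run (prod_dfa (Muu M u) (A u)) x (a # v))" unfolding run.simps(2) by (rule h2)
      show ?thesis by (rule exI[where x="a # v"], rule conjI[OF e1 e2])
    qed
  next
    case Dollar
    then show ?thesis using Cons.prems by (simp add: D1_simps)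
  qed
qed

lemma prun_Inl:
  assumes "fdfa M A" "q \<in> states M"
  shows "prun (D1 M A) (Inl q) (map Sym u) = Some (Inl (run M q u))"
  using assms(2)
proof (induction u arbitrary: q)
  case Nil then show ?case by simp
next
  case (Cons a u)
  have "trans M q a \<in> states M" using assms(1) Cons.prems by (auto simp: fdfa_def complete_dfa_def)
  with Cons show ?case by (simp add: D1_simps)
qed

lemma prun_Inl_inv:
  assumes "fdfa M A" "q \<in> states M" "prun (D1 M A) (Inl q) w = Some (Inr p)"
  shows "\<exists>u v. w = map Sym u @ Dollar # map Sym v \<and>
     p = (run M q u, run (prod_dfa (Muu M (run M q u)) (A (run M q u)))
                        (init (prod_dfa (Muu M (run M q u)) (A (run M q u)))) v)"
  using assms(2,3)
proof (induction w arbitrary: q)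
  case Nil then show ?case by simp
next
  case (Cons c w)
  show ?case
  proof (cases c)
    case (Sym a)
    have st: "trans M q a \<in> states M" using assms(1) Cons.prems by (auto simp: fdfa_def complete_dfa_def)
    have "prun (D1 M A) (Inl (trans M q a)) w = Some (Inr p)"
      using Cons.prems Sym by (simp add: D1_simps)
    from Cons.IH[OF st this] show ?thesis
    proof (elim exE conjE)
      fix u v assume h1: "w = map Sym u @ Dollar # map Sym v" and
        h2: "p = (run M (trans M q a) u, run (prod_dfa (Muu M (run M (trans M q a) u)) (A (run M (trans M q a) u)))
                        (init (prod_dfa (Muu M (run M (trans M q a) u)) (A (run M (trans M q a) u)))) v)"
      have e1: "c # w = map Sym (a # u) @ Dollar # map Sym v" using h1 Sym by simp
      have e2: "p = (run M q (a # u), run (prod_dfa (Muu M (run M q (a # u))) (A (run M q (a # u))))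
                        (init (prod_dfa (Muu M (run M q (a # u))) (A (run M q (a # u))))) v)"
        unfolding run.simps(2) by (rule h2)
      show ?thesis by (rule exI[where x="a # u"], rule exI[where x=v], rule conjI[OF e1 e2])
    qed
  next
    case Dollar
    have "prun (D1 M A) (Inr (q, init (prod_dfa (Muu M q) (A q)))) w = Some (Inr p)"
      using Cons.prems Dollar by (simp add: D1_simps)
    from prun_Inr_inv[OF assms(1) Cons.prems(1) init_prod_states[OF assms(1) Cons.prems(1)] this]
    show ?thesis
    proof (elim exE conjE)
      fix v assume h1: "w = map Sym v" and
        h2: "(Inr p :: 'q + _) = Inr (q, run (prod_dfa (Muu M q) (A q)) (init (prod_dfa (Muu M q) (A q))) v)"
      have e1: "c # w = map Sym [] @ Dollar # map Sym v" using h1 Dollar by simp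
      have e2: "p = (run M q [],
            run (prod_dfa (Muu M (run M q [])) (A (run M q [])))
             (init (prod_dfa (Muu M (run M q [])) (A (run M q [])))) v)"
        unfolding run.simps(1) using h2 by (rule Inr_inject)
      show ?thesis by (rule exI[where x="[]"], rule exI[where x=v], rule conjI[OF e1 e2])
    qed
  qed
qed

theorem proposition4:
  fixes M :: "('q, 'a::finite) dfa" and A :: "'q \<Rightarrow> ('s, 'a) dfa"
  assumes "fdfa M A"
  shows "plang (D1 M A) =
    {map Sym u @ [Dollar] @ map Sym v | u v.
       reach M (u @ v) = reach M u \<and> v \<in> lang (A (reach M u))}"
proof (rule equalityI)
  have q0: "init M \<in> states M" using assms by (auto simp: fdfa_def complete_dfa_def)
  show "plang (D1 M A) \<subseteq> {map Sym u @ [Dollar] @ map Sym v | u v.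
       reach M (u @ v) = reach M u \<and> v \<in> lang (A (reach M u))}"
  proof
    fix w assume "w \<in> plang (D1 M A)"
    then obtain s where s: "prun (D1 M A) (Inl (init M)) w = Some s" "s \<in> pfinal (D1 M A)"
      by (auto simp: plang_def D1_simps)
    then obtain u' x where ux: "s = Inr (u', x)" "u' \<in> states M" "x \<in> final (prod_dfa (Muu M u') (A u'))"
      by (auto simp: D1_simps)
    have "prun (D1 M A) (Inl (init M)) w = Some (Inr (u', x))" using s(1) ux(1) by simp
    from prun_Inl_inv[OF assms q0 this] obtain u v where
      uv0: "w = map Sym u @ Dollar # map Sym v \<and>
        (u', x) = (run M (init M) u, run (prod_dfa (Muu M (run M (init M) u)) (A (run M (init M) u)))
                        (init (prod_dfa (Muu M (run M (init M) u)) (A (run M (init M) u)))) v)"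
      by (metis that)
    note uv = conjunct1[OF uv0] conjunct2[OF uv0]
    have "x = (run M u' v, run (A u') (init (A u')) v)" using uv(2)
      by (simp add: prod_simps run_prod run_Muu)
    with ux(3) have "run M u' v = u'" "run (A u') (init (A u')) v \<in> final (A u')"
      by (auto simp: prod_simps)
    moreover have u': "u' = run M (init M) u" using uv(2) by simp
    ultimately have r1: "reach M (u @ v) = reach M u" and r2: "v \<in> lang (A (reach M u))"
      by (simp_all add: reach_def lang_def run_append)
    have w1: "w = map Sym u @ [Dollar] @ map Sym v" using uv(1) by simp
    show "w \<in> {map Sym u @ [Dollar] @ map Sym v | u v.
       reach M (u @ v) = reach M u \<and> v \<in> lang (A (reach M u))}"
      by (rule CollectI, rule exI[where x=u], rule exI[where x=v], rule conjI[OF w1 conjI[OF r1 r2]])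
  qed
  show "{map Sym u @ [Dollar] @ map Sym v | u v.
       reach M (u @ v) = reach M u \<and> v \<in> lang (A (reach M u))} \<subseteq> plang (D1 M A)"
  proof
    fix w assume "w \<in> {map Sym u @ [Dollar] @ map Sym v | u v.
       reach M (u @ v) = reach M u \<and> v \<in> lang (A (reach M u))}"
    then obtain u v where w: "w = map Sym u @ [Dollar] @ map Sym v"
      "reach M (u @ v) = reach M u" "v \<in> lang (A (reach M u))" by blast
    define q where "q = run M (init M) u"
    have qs: "q \<in> states M" unfolding q_def using run_states assms q0 by (auto simp: fdfa_def)
    have pr: "prun (D1 M A) (Inl (init M)) (map Sym u) = Some (Inl q)"
      using prun_Inl[OF assms q0] q_def by simp
    have dol: "prun (D1 M A) (Inl q) [Dollar] = Some (Inr (q, init (prod_dfa (Muu M q) (A q))))"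
      using qs by (simp add: D1_simps)
    have rest: "prun (D1 M A) (Inr (q, init (prod_dfa (Muu M q) (A q)))) (map Sym v)
        = Some (Inr (q, (run M q v, run (A q) (init (A q)) v)))"
      using prun_Inr[OF assms qs init_prod_states[OF assms qs]]
      by (simp add: prod_simps run_prod run_Muu)
    have "run M q v = q" "run (A q) (init (A q)) v \<in> final (A q)"
      using w(2,3) by (auto simp: q_def reach_def lang_def run_append)
    then have "Inr (q, (run M q v, run (A q) (init (A q)) v)) \<in> pfinal (D1 M A)"
      using qs by (auto simp: D1_simps prod_dfa_def Muu_def)
    note fin = this
    have pw: "prun (D1 M A) (Inl (init M)) (map Sym u @ [Dollar] @ map Sym v)
        = Some (Inr (q, (run M q v, run (A q) (init (A q)) v)))"
      unfolding prun_app pr by (simp add: D1_simps(2) qs rest)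
    have "\<exists>s. prun (D1 M A) (pinit (D1 M A)) w = Some s \<and> s \<in> pfinal (D1 M A)"
      unfolding w(1) D1_simps(5) by (rule exI, rule conjI[OF pw fin])
    then show "w \<in> plang (D1 M A)" unfolding plang_def by (rule CollectI)
  qed
qed

end
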